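(* If a finite simple graph $G$ contains an induced subgraph isomorphic to the path $P_k$ on $k$ vertices, where $k\ge 3$, then $\mathrm{mur}(G)\ge k-2$.
   Context: For a finite simple undirected graph $G$ on vertices $v_1,\dots,v_n$, let $A_G$ be its $(0,1)$-adjacency matrix, $D_G=\mathrm{diag}(d_1,\dots,d_n)$ with $d_i$ the degree of $v_i$, $I$ the $n\times n$ identity matrix and $J$ the $n\times n$ all-ones matrix. A universal adjacency matrix of $G$ is any matrix $\alpha A_G+\beta I+\gamma J+\delta D_G$ with real scalars $\alpha,\beta,\gamma,\delta$ and $\alpha\neq 0$. The minimum universal rank $\mathrm{mur}(G)$ is the minimum rank over all universal adjacency matrices of $G$. *)

theory Defs
  imports "HOL-Analysis.Analysis"
begin

definition simple_graph :: "('n::finite \<Rightarrow> 'n \<Rightarrow> bool) \<Rightarrow> bool" where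
  "simple_graph E \<longleftrightarrow> (\<forall>u v. E u v \<longrightarrow> E v u) \<and> (\<forall>v. \<not> E v v)"

definition adj_matrix :: "('n::finite \<Rightarrow> 'n \<Rightarrow> bool) \<Rightarrow> real^'n^'n" where
  "adj_matrix E = (\<chi> i j. if E i j then 1 else 0)"

definition degree :: "('n::finite \<Rightarrow> 'n \<Rightarrow> bool) \<Rightarrow> 'n \<Rightarrow> nat" where
  "degree E v = card {u. E v u}"

definition deg_matrix :: "('n::finite \<Rightarrow> 'n \<Rightarrow> bool) \<Rightarrow> real^'n^'n" where
  "deg_matrix E = (\<chi> i j. if i = j then real (degree E i) else 0)"

definition all_ones :: "real^'n^'n" where
  "all_ones = (\<chi> i j. 1)"

definition universal_adj_matrix ::
  "('n::finite \<Rightarrow> 'n \<Rightarrow> bool) \<Rightarrow> real \<Rightarrow> real \<Rightarrow> real \<Rightarrow> real \<Rightarrow> real^'n^'n" where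
  "universal_adj_matrix E \<alpha> \<beta> \<gamma> \<delta> =
     \<alpha> *\<^sub>R adj_matrix E + \<beta> *\<^sub>R mat 1 + \<gamma> *\<^sub>R all_ones + \<delta> *\<^sub>R deg_matrix E"

definition mur :: "('n::finite \<Rightarrow> 'n \<Rightarrow> bool) \<Rightarrow> nat" where
  "mur E = Inf {rank (universal_adj_matrix E \<alpha> \<beta> \<gamma> \<delta>) | \<alpha> \<beta> \<gamma> \<delta>. \<alpha> \<noteq> 0}"

definition has_induced_path :: "('n::finite \<Rightarrow> 'n \<Rightarrow> bool) \<Rightarrow> nat \<Rightarrow> bool" where
  "has_induced_path E k \<longleftrightarrow>
     (\<exists>f :: nat \<Rightarrow> 'n. inj_on f {0..<k} \<and>
        (\<forall>i<k. \<forall>j<k. E (f i) (f j) \<longleftrightarrow> (i + 1 = j \<or> j + 1 = i)))"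

end

theory Submission
  imports Defs
begin

lemma tri_indep:
  fixes w :: "nat \<Rightarrow> real^'n" and g :: "nat \<Rightarrow> 'n"
  assumes nz: "\<And>i. i<m \<Longrightarrow> w i $ g i \<noteq> 0"
    and z: "\<And>i j. i<m \<Longrightarrow> j<m \<Longrightarrow> i<j \<Longrightarrow> w i $ g j = 0"
  shows "independent (w ` {0..<m}) \<and> card (w ` {0..<m}) = m"
proof -
  have inj: "inj_on w {0..<m}"
  proof (rule inj_onI)
    fix i j assume i: "i \<in> {0..<m}" and j: "j \<in> {0..<m}" and e: "w i = w j"
    show "i = j"
    proof (rule ccontr)
      assume "i \<noteq> j"
      then consider "i < j" | "j < i" by linarith
      then show False
      proof cases
        case 1 then show False using z[of i j] nz[of j] i j e by auto
      next
        case 2 then show False using z[of j i] nz[of i] i j e by auto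
      qed
    qed
  qed
  have "independent (w ` {0..<m})"
  proof (rule independent_if_scalars_zero)
    show "finite (w ` {0..<m})" by simp
    fix c x
    assume s: "(\<Sum>x\<in>w ` {0..<m}. c x *\<^sub>R x) = 0" and x: "x \<in> w ` {0..<m}"
    have s2: "(\<Sum>l\<in>{0..<m}. c (w l) *\<^sub>R w l) = 0"
      using s by (simp add: sum.reindex[OF inj])
    have all: "\<forall>i<m. c (w i) = 0"
    proof (rule ccontr)
      assume "\<not> (\<forall>i<m. c (w i) = 0)"
      then have ne: "{i. i<m \<and> c (w i) \<noteq> 0} \<noteq> {}" by auto
      define i where "i = Max {i. i<m \<and> c (w i) \<noteq> 0}"
      have fin: "finite {i. i<m \<and> c (w i) \<noteq> 0}" by simp
      have iS: "i < m" "c (w i) \<noteq> 0" using Max_in[OF fin ne] unfolding i_def by auto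
      have big: "\<And>l. l < m \<Longrightarrow> i < l \<Longrightarrow> c (w l) = 0"
      proof (rule ccontr)
        fix l assume "l < m" "i < l" "c (w l) \<noteq> 0"
        then have "l \<le> i" using Max_ge[OF fin, of l] unfolding i_def by auto
        then show False using \<open>i < l\<close> by simp
      qed
      have "(\<Sum>l\<in>{0..<m}. c (w l) * (w l $ g i)) = 0"
        using arg_cong[OF s2, of "\<lambda>v. v $ g i"] by simp
      moreover have "(\<Sum>l\<in>{0..<m}. c (w l) * (w l $ g i)) = c (w i) * (w i $ g i) + (\<Sum>l\<in>{0..<m}-{i}. c (w l) * (w l $ g i))"
        by (rule sum.remove) (auto simp: iS)
      moreover have "(\<Sum>l\<in>{0..<m}-{i}. c (w l) * (w l $ g i)) = 0"
      proof (rule sum.neutral, intro ballI)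
        fix l assume l: "l \<in> {0..<m}-{i}"
        then consider "l < i" | "i < l" by force
        then show "c (w l) * (w l $ g i) = 0"
        proof cases
          case 1 then show ?thesis using z[of l i] iS l by auto
        next
          case 2 then show ?thesis using big[of l] l by auto
        qed
      qed
      ultimately show False using iS nz[of i] by simp
    qed
    then show "c x = 0" using x by auto
  qed
  then show ?thesis using inj by (simp add: card_image)
qed

lemma uam_entry:
  "universal_adj_matrix E \<alpha> \<beta> \<gamma> \<delta> $ a $ b =
     \<alpha> * (if E a b then 1 else 0) + \<beta> * (if a = b then 1 else 0) + \<gamma> +
     \<delta> * (if a = b then real (degree E a) else 0)"
  by (simp add: universal_adj_matrix_def adj_matrix_def deg_matrix_def all_ones_def mat_def)

lemma rank_bound_path:
  fixes E :: "'n::finite \<Rightarrow> 'n \<Rightarrow> bool" and k :: nat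
  assumes "k \<ge> 3" and "has_induced_path E k" and "\<alpha> \<noteq> 0"
  shows "k - 2 \<le> rank (universal_adj_matrix E \<alpha> \<beta> \<gamma> \<delta>)"
proof -
  let ?M = "universal_adj_matrix E \<alpha> \<beta> \<gamma> \<delta>"
  obtain f :: "nat \<Rightarrow> 'n" where inj: "inj_on f {0..<k}"
    and adj: "\<And>i j. i<k \<Longrightarrow> j<k \<Longrightarrow> E (f i) (f j) \<longleftrightarrow> (i + 1 = j \<or> j + 1 = i)"
    using assms(2) unfolding has_induced_path_def by blast
  have fne: "f i \<noteq> f j" if "i<k" "j<k" "i\<noteq>j" for i j
    using inj that by (auto dest: inj_onD)
  define m where "m = k - 2"
  define w where "w i = ?M *v (axis (f i) 1 - axis (f (i+1)) 1)" for i
  define g where "g i = f (i+2)" for i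
  have wc: "w i $ r = ?M $ r $ f i - ?M $ r $ f (i+1)" for i r
    by (simp add: w_def matrix_vector_mult_diff_distrib matrix_vector_mult_basis column_def)
  have "independent (w ` {0..<m}) \<and> card (w ` {0..<m}) = m"
  proof (rule tri_indep)
    fix i assume i: "i < m"
    have "w i $ g i = - \<alpha>"
      using i adj[of "i+2" i] adj[of "i+2" "i+1"] fne[of "i+2" i] fne[of "i+2" "i+1"]
      by (simp add: wc g_def uam_entry m_def)
    then show "w i $ g i \<noteq> 0" using assms(3) by simp
  next
    fix i j assume i: "i < m" and j: "j < m" and ij: "i < j"
    show "w i $ g j = 0"
      using i j ij adj[of "j+2" i] adj[of "j+2" "i+1"] fne[of "j+2" i] fne[of "j+2" "i+1"]
      by (simp add: wc g_def uam_entry m_def)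
  qed
  moreover have "w ` {0..<m} \<subseteq> range (\<lambda>x. ?M *v x)" by (auto simp: w_def)
  ultimately have "m \<le> dim (range (\<lambda>x. ?M *v x))"
    using independent_card_le_dim by metis
  then show ?thesis by (simp add: rank_dim_range m_def)
qed

theorem lemma6:
  fixes E :: "'n::finite \<Rightarrow> 'n \<Rightarrow> bool" and k :: nat
  assumes "simple_graph E"
    and "k \<ge> 3"
    and "has_induced_path E k"
  shows "mur E \<ge> k - 2"
  unfolding mur_def
proof (rule cInf_greatest)
  show "{rank (universal_adj_matrix E \<alpha> \<beta> \<gamma> \<delta>) | \<alpha> \<beta> \<gamma> \<delta>. \<alpha> \<noteq> 0} \<noteq> {}"
    by (metis (mono_tags, lifting) empty_iff mem_Collect_eq zero_neq_one)
next
  fix x assume "x \<in> {rank (universal_adj_matrix E \<alpha> \<beta> \<gamma> \<delta>) | \<alpha> \<beta> \<gamma> \<delta>. \<alpha> \<noteq> 0}"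
  then show "k - 2 \<le> x" using rank_bound_path[OF assms(2,3)] by auto
qed

end
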